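(* Let $f\in\operatorname{NDPF}^{(1)}_N$ and let $F_f$ be the set of integers that are maximal elements of their fibers under $f$. If $m,m'$ are distinct elements of $F_f\cap\{1,2,\dots,N\}$, then $f(m)\not\equiv f(m')\pmod N$.
   Context: $\operatorname{NDPF}^{(1)}_N$ is the set of functions $f:\mathbb{Z}\to\mathbb{Z}$ that are regressive ($f(i)\le i$), order preserving and skew periodic ($f(i+N)=f(i)+N$), excluding the shift functions $i\mapsto i-t$ with $t\ne0$. The fiber of $i$ under $f$ is $f^{-1}(f(i))$. *)

theory Defs
  imports Main
begin

definition NDPF1 :: "nat \<Rightarrow> (int \<Rightarrow> int) set" where
  "NDPF1 N = {f. (\<forall>i. f i \<le> i)
              \<and> mono f
              \<and> (\<forall>i. f (i + int N) = f i + int N)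
              \<and> \<not> (\<exists>t. t \<noteq> 0 \<and> f = (\<lambda>i. i - t))}"

definition fiber :: "(int \<Rightarrow> int) \<Rightarrow> int \<Rightarrow> int set" where
  "fiber f i = f -` {f i}"

definition fiber_maxima :: "(int \<Rightarrow> int) \<Rightarrow> int set" where
  "fiber_maxima f = {i. \<forall>j \<in> fiber f i. j \<le> i}"

end

theory Submission
  imports Defs
begin

lemma aux:
  fixes N :: nat and f :: "int \<Rightarrow> int" and m m' :: int
  assumes mo: "mono f" and per: "\<And>i. f (i + int N) = f i + int N"
    and mm: "m < m'" "m' < m + int N"
    and fm: "m \<in> fiber_maxima f" and fm': "m' \<in> fiber_maxima f"
    and eq: "f m mod int N = f m' mod int N"
  shows False
proof -
  have a: "f m \<le> f m'" using mo mm by (simp add: monoD)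
  have b: "f m' \<le> f m + int N" using mo mm per[of m] monoD[of f m' "m + int N"] by simp
  have "int N dvd (f m' - f m)" using eq[symmetric] by (simp add: mod_eq_dvd_iff)
  then obtain k where k: "f m' - f m = int N * k" by (auto simp: dvd_def)
  have N: "int N > 0" using mm by simp
  have "k \<ge> 0"
  proof (rule ccontr)
    assume "\<not> k \<ge> 0"
    then have "int N * k < 0" using N by (simp add: mult_pos_neg)
    then show False using a k by linarith
  qed
  moreover have "k \<le> 1"
  proof (rule ccontr)
    assume "\<not> k \<le> 1"
    then have "int N * k \<ge> int N * 2" using N by (intro mult_left_mono) auto
    then show False using b k N by linarith
  qed
  ultimately have "k = 0 \<or> k = 1" by auto
  then show False
  proof
    assume "k = 0"
    then have "f m' = f m" using k by simp
    then have "m' \<in> fiber f m" by (simp add: fiber_def)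
    then show False using fm mm by (auto simp: fiber_maxima_def)
  next
    assume "k = 1"
    then have "f (m + int N) = f m'" using k per[of m] by simp
    then have "m + int N \<in> fiber f m'" by (simp add: fiber_def)
    then show False using fm' mm by (auto simp: fiber_maxima_def)
  qed
qed

theorem mainTheorem9:
  fixes N :: nat and f :: "int \<Rightarrow> int" and m m' :: int
  assumes "N \<ge> 1"
    and "f \<in> NDPF1 N"
    and "m \<in> fiber_maxima f \<inter> {1..int N}"
    and "m' \<in> fiber_maxima f \<inter> {1..int N}"
    and "m \<noteq> m'"
  shows "f m mod int N \<noteq> f m' mod int N"
proof
  assume eq: "f m mod int N = f m' mod int N"
  have mo: "mono f" and per: "\<And>i. f (i + int N) = f i + int N"
    using assms(2) by (auto simp: NDPF1_def)
  show False
  proof (cases "m < m'")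
    case True
    then show ?thesis using aux[OF mo per, of m m'] assms eq by auto
  next
    case False
    then have "m' < m" using assms(5) by simp
    then show ?thesis using aux[OF mo per, of m' m] assms eq by auto
  qed
qed

end
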